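(* Let $N=2$, $\Omega\subset\mathbb{R}^2$ a bounded domain, $F$ as in the context, $\lambda>0$, $0<R_1<R_2$, and let $\varphi\in C^\infty(\mathbb{R})$ be nonincreasing with $\varphi(x)=1$ for $x\le R_1$ and $\varphi(x)=0$ for $x\ge R_2$. Define on $W_0^{1,2}(\Omega)$ $$J(u)=\frac12\int_\Omega F^2(\nabla u)\,dx-\lambda\int_\Omega\varphi\big(\|u\|_{W_0^{1,2}(\Omega)}\big)e^u\,dx.$$ Then $\inf_{u\in W_0^{1,2}(\Omega)}J(u)<-\lambda|\Omega|$.
   Context: Standing assumptions on $F$: $F:\mathbb{R}^N\to[0,\infty)$ is convex, $F\in C^2(\mathbb{R}^N\setminus\{0\})$, $F(t\xi)=|t|F(\xi)$, $F(\xi)>0$ for $\xi\neq0$; $a|\xi|\le F(\xi)\le b|\xi|$ for constants $0<a\le b$; and $\mu^2|V|^2\le\sum_{i,j}F_{\xi_i\xi_j}(\xi)V_iV_j\le\Lambda|V|^2$ for all unit $\xi$ and all $V\perp\xi$. $|\Omega|$ is the Lebesgue measure of $\Omega$. *)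

theory Defs
  imports "HOL-Analysis.Analysis"
begin

definition pd :: "2 \<Rightarrow> (real^2 \<Rightarrow> real) \<Rightarrow> real^2 \<Rightarrow> real" where
  "pd i f x = deriv (\<lambda>t. f (x + t *\<^sub>R axis i 1)) 0"

definition pds :: "2 list \<Rightarrow> (real^2 \<Rightarrow> real) \<Rightarrow> real^2 \<Rightarrow> real" where
  "pds is f = foldr pd is f"

definition smooth2 :: "(real^2 \<Rightarrow> real) \<Rightarrow> bool" where
  "smooth2 f \<longleftrightarrow> (\<forall>is. continuous_on UNIV (pds is f) \<and>
      (\<forall>i x. (\<lambda>t. pds is f (x + t *\<^sub>R axis i 1)) differentiable (at 0)))"

definition grad2 :: "(real^2 \<Rightarrow> real) \<Rightarrow> real^2 \<Rightarrow> real^2" where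
  "grad2 f x = (\<chi> i. pd i f x)"

definition smooth1 :: "(real \<Rightarrow> real) \<Rightarrow> bool" where
  "smooth1 g \<longleftrightarrow> (\<forall>k x. ((deriv ^^ k) g) differentiable (at x))"

definition test_fn :: "(real^2) set \<Rightarrow> (real^2 \<Rightarrow> real) \<Rightarrow> bool" where
  "test_fn \<Omega> \<psi> \<longleftrightarrow> smooth2 \<psi> \<and> compact (closure {x. \<psi> x \<noteq> 0}) \<and>
      closure {x. \<psi> x \<noteq> 0} \<subseteq> \<Omega>"

text \<open>u belongs to W_0^{1,2}(Omega) with weak gradient Du: u, Du are limits in L^2
  (resp. of the gradients) of test functions on Omega.\<close>
definition W012 :: "(real^2) set \<Rightarrow> (real^2 \<Rightarrow> real) \<Rightarrow> (real^2 \<Rightarrow> real^2) \<Rightarrow> bool" where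
  "W012 \<Omega> u Du \<longleftrightarrow> u \<in> borel_measurable lborel \<and> Du \<in> borel_measurable lborel \<and>
     (\<exists>\<psi>. (\<forall>k. test_fn \<Omega> (\<psi> k)) \<and>
        (\<lambda>k. \<integral>\<^sup>+ x. ennreal ((\<psi> k x - u x)\<^sup>2) \<partial>lborel) \<longlonglongrightarrow> 0 \<and>
        (\<lambda>k. \<integral>\<^sup>+ x. ennreal ((norm (grad2 (\<psi> k) x - Du x))\<^sup>2) \<partial>lborel) \<longlonglongrightarrow> 0)"

definition W012_norm :: "(real^2) set \<Rightarrow> (real^2 \<Rightarrow> real^2) \<Rightarrow> real" where
  "W012_norm \<Omega> Du = sqrt (\<integral>x\<in>\<Omega>. (norm (Du x))\<^sup>2 \<partial>lborel)"

definition F_assms :: "(real^2 \<Rightarrow> real) \<Rightarrow> real \<Rightarrow> real \<Rightarrow> real \<Rightarrow> real \<Rightarrow> bool" where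
  "F_assms F a b \<mu> \<Lambda> \<longleftrightarrow>
     (\<forall>\<xi>. F \<xi> \<ge> 0) \<and> convex_on UNIV F \<and>
     (\<exists>G H. (\<forall>\<xi>. \<xi> \<noteq> 0 \<longrightarrow> (F has_derivative (\<lambda>h. G \<xi> \<bullet> h)) (at \<xi>) \<and>
                                (G has_derivative (\<lambda>h. H \<xi> *v h)) (at \<xi>)) \<and>
            continuous_on (UNIV - {0}) H \<and>
            (\<forall>\<xi> V. norm \<xi> = 1 \<longrightarrow> V \<bullet> \<xi> = 0 \<longrightarrow>
                 \<mu>\<^sup>2 * (norm V)\<^sup>2 \<le> V \<bullet> (H \<xi> *v V) \<and> V \<bullet> (H \<xi> *v V) \<le> \<Lambda> * (norm V)\<^sup>2)) \<and>
     (\<forall>t \<xi>. F (t *\<^sub>R \<xi>) = \<bar>t\<bar> * F \<xi>) \<and>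
     (\<forall>\<xi>. \<xi> \<noteq> 0 \<longrightarrow> F \<xi> > 0) \<and>
     0 < a \<and> a \<le> b \<and> (\<forall>\<xi>. a * norm \<xi> \<le> F \<xi> \<and> F \<xi> \<le> b * norm \<xi>)"

end

theory Submission
  imports Defs
begin


inductive Sm :: "(real \<Rightarrow> real) \<Rightarrow> (real^2 \<Rightarrow> real) \<Rightarrow> bool" for \<phi> where
  Sm_const: "Sm \<phi> (\<lambda>x. c)"
| Sm_base: "Sm \<phi> (\<lambda>x. (deriv ^^ k) \<phi> (p + s * x $ j))"
| Sm_add: "Sm \<phi> f \<Longrightarrow> Sm \<phi> g \<Longrightarrow> Sm \<phi> (\<lambda>x. f x + g x)"
| Sm_mul: "Sm \<phi> f \<Longrightarrow> Sm \<phi> g \<Longrightarrow> Sm \<phi> (\<lambda>x. f x * g x)"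

lemma smooth1_deriv:
  assumes "smooth1 \<phi>"
  shows "((deriv ^^ k) \<phi> has_real_derivative (deriv ^^ Suc k) \<phi> y) (at y)"
proof -
  have "(deriv ^^ k) \<phi> differentiable (at y)" using assms unfolding smooth1_def by blast
  then show ?thesis using DERIV_deriv_iff_real_differentiable by simp
qed

lemma Sm_cont:
  assumes "smooth1 \<phi>" "Sm \<phi> f"
  shows "continuous_on UNIV f"
  using assms(2)
proof induction
  case (Sm_base k p s j)
  have "\<And>y. isCont ((deriv ^^ k) \<phi>) y"
    using smooth1_deriv[OF assms(1)] DERIV_isCont by blast
  then have "continuous_on UNIV ((deriv ^^ k) \<phi>)"
    by (simp add: continuous_on_eq_continuous_at)
  moreover have "continuous_on UNIV (\<lambda>x::real^2. p + s * x $ j)"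
    by (intro continuous_intros)
  ultimately show ?case
    using continuous_on_compose2[of UNIV "(deriv ^^ k) \<phi>" UNIV "\<lambda>x::real^2. p + s * x $ j"]
    by auto
qed (auto intro: continuous_intros)

lemma Sm_deriv:
  assumes "smooth1 \<phi>" "Sm \<phi> f"
  shows "\<exists>g. Sm \<phi> g \<and> (\<forall>x. ((\<lambda>t. f (x + t *\<^sub>R axis i 1)) has_real_derivative g x) (at 0))"
  using assms(2)
proof induction
  case (Sm_const c)
  then show ?case by (intro exI[of _ "\<lambda>x. 0"]) (auto intro: Sm.intros)
next
  case (Sm_base k p s j)
  define a where "a = (axis i (1::real)) $ j"
  have eq: "\<And>x t. p + s * (x + t *\<^sub>R axis i 1) $ j = (p + s * x $ j) + t * (s * a)"
    by (simp add: a_def algebra_simps)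
  show ?case
  proof (intro exI[of _ "\<lambda>x. (s * a) * (deriv ^^ Suc k) \<phi> (p + s * x $ j)"] conjI allI)
    show "Sm \<phi> (\<lambda>x. (s * a) * (deriv ^^ Suc k) \<phi> (p + s * x $ j))"
      by (rule Sm.Sm_mul[OF Sm.Sm_const Sm.Sm_base])
    fix x :: "real^2"
    have d1: "((\<lambda>t. (p + s * x $ j) + t * (s * a)) has_real_derivative (s * a)) (at 0)"
      by (auto intro!: derivative_eq_intros)
    have "((\<lambda>t. (deriv ^^ k) \<phi> ((p + s * x $ j) + t * (s * a))) has_real_derivative
          (deriv ^^ Suc k) \<phi> (p + s * x $ j) * (s * a)) (at 0)"
      using DERIV_chain2[OF _ d1, of "(deriv ^^ k) \<phi>"] smooth1_deriv[OF assms(1)] by simp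
    then show "((\<lambda>t. (deriv ^^ k) \<phi> (p + s * (x + t *\<^sub>R axis i 1) $ j)) has_real_derivative
          (s * a) * (deriv ^^ Suc k) \<phi> (p + s * x $ j)) (at 0)"
      unfolding eq by (simp add: mult.commute)
  qed
next
  case (Sm_add f g)
  then obtain f' g' where "Sm \<phi> f'" "Sm \<phi> g'"
    "\<forall>x. ((\<lambda>t. f (x + t *\<^sub>R axis i 1)) has_real_derivative f' x) (at 0)"
    "\<forall>x. ((\<lambda>t. g (x + t *\<^sub>R axis i 1)) has_real_derivative g' x) (at 0)" by blast
  then show ?case
    by (intro exI[of _ "\<lambda>x. f' x + g' x"]) (auto intro: Sm.intros DERIV_add)
next
  case (Sm_mul f g)
  then obtain f' g' where "Sm \<phi> f'" "Sm \<phi> g'"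
    "\<forall>x. ((\<lambda>t. f (x + t *\<^sub>R axis i 1)) has_real_derivative f' x) (at 0)"
    "\<forall>x. ((\<lambda>t. g (x + t *\<^sub>R axis i 1)) has_real_derivative g' x) (at 0)" by blast
  then show ?case using Sm_mul.hyps
    by (intro exI[of _ "\<lambda>x. f' x * g x + f x * g' x"])
       (auto intro!: Sm.intros intro: DERIV_mult[THEN DERIV_cong])
qed

lemma Sm_pd:
  assumes "smooth1 \<phi>" "Sm \<phi> f"
  shows "Sm \<phi> (pd i f)" "\<And>x. ((\<lambda>t. f (x + t *\<^sub>R axis i 1)) has_real_derivative pd i f x) (at 0)"
proof -
  obtain g where g: "Sm \<phi> g" "\<And>x. ((\<lambda>t. f (x + t *\<^sub>R axis i 1)) has_real_derivative g x) (at 0)"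
    using Sm_deriv[OF assms] by blast
  have "pd i f = g"
    using g(2) by (auto simp: pd_def fun_eq_iff intro: DERIV_imp_deriv)
  then show "Sm \<phi> (pd i f)" "\<And>x. ((\<lambda>t. f (x + t *\<^sub>R axis i 1)) has_real_derivative pd i f x) (at 0)"
    using g by auto
qed

lemma Sm_pds:
  assumes "smooth1 \<phi>" "Sm \<phi> f"
  shows "Sm \<phi> (pds is f)"
  using assms(2) by (induction "is") (auto simp: pds_def intro: Sm_pd[OF assms(1)])

lemma Sm_smooth2:
  assumes "smooth1 \<phi>" "Sm \<phi> f"
  shows "smooth2 f"
  unfolding smooth2_def
proof (intro allI conjI)
  fix "is" i x
  have S: "Sm \<phi> (pds is f)" using Sm_pds[OF assms] .
  show "continuous_on UNIV (pds is f)" using Sm_cont[OF assms(1) S] .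
  show "(\<lambda>t. pds is f (x + t *\<^sub>R axis i 1)) differentiable at 0"
    using Sm_pd(2)[OF assms(1) S, of x i] unfolding differentiable_def has_field_derivative_def
    by blast
qed

lemma Sm_pd_scale:
  assumes "smooth1 \<phi>" "Sm \<phi> f"
  shows "pd i (\<lambda>x. t * f x) x = t * pd i f x"
  unfolding pd_def[of i "\<lambda>x. t * f x"]
  using Sm_pd(2)[OF assms, of x i] by (intro DERIV_imp_deriv DERIV_cmult)



lemma cont_set_int:
  fixes f :: "real^2 \<Rightarrow> real"
  assumes "continuous_on UNIV f" "bounded \<Omega>" "open \<Omega>"
  shows "set_integrable lborel \<Omega> f"
proof -
  have "integrable lborel (\<lambda>x. indicator (closure \<Omega>) x *\<^sub>R f x)"
    by (rule borel_integrable_compact) (use assms in \<open>auto simp: compact_closure intro: continuous_on_subset\<close>)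
  then have "set_integrable lborel (closure \<Omega>) f" by (simp add: set_integrable_def)
  then show ?thesis
    by (rule set_integrable_subset) (use assms in \<open>auto simp: borel_open closure_subset\<close>)
qed

lemma cont_meas:
  fixes f :: "real^2 \<Rightarrow> 'b::topological_space"
  assumes "continuous_on UNIV f"
  shows "f \<in> borel_measurable lborel"
  using borel_measurable_continuous_onI[OF assms] by simp

lemma Sm_aff:
  "Sm \<phi> (\<lambda>x. \<phi> (p + s * (x $ j - d)))"
proof -
  have "Sm \<phi> (\<lambda>x. (deriv ^^ 0) \<phi> ((p - s * d) + s * x $ j))" by (rule Sm_base)
  moreover have "(\<lambda>x. (deriv ^^ 0) \<phi> ((p - s * d) + s * x $ j)) = (\<lambda>x. \<phi> (p + s * (x $ j - d)))"
    by (simp add: fun_eq_iff algebra_simps)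
  ultimately show ?thesis by simp
qed


theorem lemma3p2:
  fixes \<Omega> :: "(real^2) set" and F :: "real^2 \<Rightarrow> real" and \<phi> :: "real \<Rightarrow> real"
    and a b \<mu> \<Lambda> lam R\<^sub>1 R\<^sub>2 :: real
  assumes "open \<Omega>" "connected \<Omega>" "bounded \<Omega>" "\<Omega> \<noteq> {}"
    and "F_assms F a b \<mu> \<Lambda>"
    and "lam > 0" and "0 < R\<^sub>1" and "R\<^sub>1 < R\<^sub>2"
    and "smooth1 \<phi>" and "antimono \<phi>"
    and "\<And>x. x \<le> R\<^sub>1 \<Longrightarrow> \<phi> x = 1" and "\<And>x. x \<ge> R\<^sub>2 \<Longrightarrow> \<phi> x = 0"
  shows "\<exists>u Du. W012 \<Omega> u Du \<and>
     set_integrable lborel \<Omega> (\<lambda>x. \<phi> (W012_norm \<Omega> Du) * exp (u x)) \<and>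
     (1/2) * (\<integral>x\<in>\<Omega>. (F (Du x))\<^sup>2 \<partial>lborel)
       - lam * (\<integral>x\<in>\<Omega>. \<phi> (W012_norm \<Omega> Du) * exp (u x) \<partial>lborel)
     < - lam * measure lborel \<Omega>"
proof -
  note opn = assms(1) and bdd = assms(3) and sm = assms(9)
  obtain c where c: "c \<in> \<Omega>" using assms(4) by blast
  obtain \<epsilon> where \<epsilon>: "\<epsilon> > 0" "cball c \<epsilon> \<subseteq> \<Omega>" using open_contains_cball opn c by blast
  define \<delta> where "\<delta> = \<epsilon> / 2"
  define q where "q = R\<^sub>1 - 1"
  define \<beta> where "\<beta> = (R\<^sub>2 - q) / \<delta>"
  have \<delta>pos: "\<delta> > 0" using \<epsilon> by (simp add: \<delta>_def)
  have \<beta>pos: "\<beta> > 0" using \<delta>pos assms(8) by (simp add: \<beta>_def q_def)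
  have \<beta>\<delta>: "\<beta> * \<delta> = R\<^sub>2 - q" using \<delta>pos by (simp add: \<beta>_def)
  define \<psi> where "\<psi> x = \<phi> (q + \<beta> * (x $ 1 - c $ 1)) * \<phi> (q + (-\<beta>) * (x $ 1 - c $ 1)) *
      \<phi> (q + \<beta> * (x $ 2 - c $ 2)) * \<phi> (q + (-\<beta>) * (x $ 2 - c $ 2))" for x :: "real^2"
  have Sm\<psi>: "Sm \<phi> \<psi>"
    unfolding \<psi>_def by (rule Sm_mul[OF Sm_mul[OF Sm_mul[OF Sm_aff Sm_aff] Sm_aff] Sm_aff])
  have \<phi>nn: "\<phi> y \<ge> 0" for y
  proof (cases "y \<ge> R\<^sub>2")
    case True then show ?thesis using assms(12) by simp
  next
    case False
    then have "\<phi> R\<^sub>2 \<le> \<phi> y" using antimonoD[OF assms(10)] by simp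
    then show ?thesis using assms(12)[of R\<^sub>2] by simp
  qed
  have \<phi>nz: "\<phi> y \<noteq> 0 \<Longrightarrow> y < R\<^sub>2" for y using assms(12)[of y] by force
  have \<psi>nn: "\<psi> x \<ge> 0" for x unfolding \<psi>_def using \<phi>nn by simp
  have comp: "\<bar>x $ j - c $ j\<bar> < \<delta>" if "\<psi> x \<noteq> 0" for x j
  proof -
    have "j = 1 \<or> j = 2" using exhaust_2 by blast
    moreover have "\<bar>x $ 1 - c $ 1\<bar> < \<delta> \<and> \<bar>x $ 2 - c $ 2\<bar> < \<delta>"
    proof -
      have h: "q + \<beta> * (x $ 1 - c $ 1) < R\<^sub>2" "q + (-\<beta>) * (x $ 1 - c $ 1) < R\<^sub>2"
              "q + \<beta> * (x $ 2 - c $ 2) < R\<^sub>2" "q + (-\<beta>) * (x $ 2 - c $ 2) < R\<^sub>2"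
        using that \<phi>nz unfolding \<psi>_def by auto
      have "\<beta> * \<bar>x $ 1 - c $ 1\<bar> < \<beta> * \<delta>" "\<beta> * \<bar>x $ 2 - c $ 2\<bar> < \<beta> * \<delta>"
        using h \<beta>\<delta> by (auto simp: abs_if algebra_simps)
      then show ?thesis using \<beta>pos by simp
    qed
    ultimately show ?thesis by auto
  qed
  have supp: "{x. \<psi> x \<noteq> 0} \<subseteq> cball c \<epsilon>"
  proof
    fix x assume "x \<in> {x. \<psi> x \<noteq> 0}"
    then have "\<bar>(x - c) $ 1\<bar> < \<delta>" "\<bar>(x - c) $ 2\<bar> < \<delta>" using comp by auto
    moreover have "norm (x - c) \<le> \<bar>(x - c) $ 1\<bar> + \<bar>(x - c) $ 2\<bar>"
      using norm_le_l1_cart[of "x - c"] by (simp add: UNIV_2)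
    ultimately show "x \<in> cball c \<epsilon>" by (simp add: dist_norm norm_minus_commute \<delta>_def)
  qed
  define r where "r = 1 / \<beta>"
  have rpos: "r > 0" using \<beta>pos by (simp add: r_def)
  have \<psi>one: "\<psi> x = 1" if "x \<in> ball c r" for x
  proof -
    have n: "norm (x - c) < r" using that by (simp add: dist_norm norm_minus_commute)
    have "\<bar>x $ j - c $ j\<bar> < r" for j
      using component_le_norm_cart[of "x - c" j] n by simp
    then have bj: "\<beta> * \<bar>x $ j - c $ j\<bar> \<le> 1" for j
      using \<beta>pos by (simp add: r_def field_simps less_imp_le)
    have "q + \<beta> * (x $ j - c $ j) \<le> R\<^sub>1 \<and> q + (-\<beta>) * (x $ j - c $ j) \<le> R\<^sub>1" for j
    proof -
      have "\<beta> * (x $ j - c $ j) \<le> \<beta> * \<bar>x $ j - c $ j\<bar>" "\<beta> * (c $ j - x $ j) \<le> \<beta> * \<bar>x $ j - c $ j\<bar>"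
        using \<beta>pos by (auto intro!: mult_left_mono)
      then show ?thesis
        using bj[of j] unfolding q_def by (auto simp: algebra_simps)
    qed
    then show ?thesis unfolding \<psi>_def using assms(11) by simp
  qed
  have \<psi>cont: "continuous_on UNIV \<psi>" using Sm_cont[OF sm Sm\<psi>] .
  define g where "g = grad2 \<psi>"
  have gcont: "continuous_on UNIV g"
    unfolding g_def grad2_def
    by (intro continuous_on_vec_lambda Sm_cont[OF sm] Sm_pd(1)[OF sm Sm\<psi>])
  have Fcont: "continuous_on UNIV F"
    using assms(5) by (intro convex_on_continuous) (auto simp: F_assms_def)
  have Fhom: "F (t *\<^sub>R v) = \<bar>t\<bar> * F v" for t v using assms(5) by (simp add: F_assms_def)
  have Fnn: "F v \<ge> 0" for v using assms(5) by (simp add: F_assms_def)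
  define M2 where "M2 = (\<integral>x\<in>\<Omega>. (norm (g x))\<^sup>2 \<partial>lborel)"
  define A where "A = (\<integral>x\<in>\<Omega>. (F (g x))\<^sup>2 \<partial>lborel)"
  define B where "B = (\<integral>x\<in>\<Omega>. \<psi> x \<partial>lborel)"
  have M2nn: "M2 \<ge> 0" unfolding M2_def set_lebesgue_integral_def
    by (intro integral_nonneg_AE) (auto simp: indicator_def)
  have Ann: "A \<ge> 0" unfolding A_def set_lebesgue_integral_def
    by (intro integral_nonneg_AE) (auto simp: indicator_def)
  have \<Omega>sets: "\<Omega> \<in> sets lborel" using opn by (simp add: borel_open)
  have \<psi>int: "set_integrable lborel \<Omega> \<psi>" using cont_set_int[OF \<psi>cont bdd opn] .
  have indK: "integrable lborel (indicator (ball c r) :: real^2 \<Rightarrow> real)"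
    by (intro integrable_real_indicator emeasure_bounded_finite) auto
  have ind\<Omega>: "integrable lborel (indicator \<Omega> :: real^2 \<Rightarrow> real)"
    by (intro integrable_real_indicator emeasure_bounded_finite \<Omega>sets bdd)
  have ballsub: "ball c r \<subseteq> \<Omega>"
  proof -
    have "r \<le> \<epsilon>"
    proof -
      have "\<beta> * \<delta> \<ge> 1" using \<beta>\<delta> q_def assms(8) by simp
      then have "r \<le> \<delta>" using \<beta>pos by (simp add: r_def field_simps)
      then show ?thesis using \<epsilon> by (simp add: \<delta>_def)
    qed
    then show ?thesis using \<epsilon>(2) by auto
  qed
  have Bpos: "B > 0"
  proof -
    have "(LINT x|lborel. indicator (ball c r) x) \<le> (LINT x|lborel. indicator \<Omega> x *\<^sub>R \<psi> x)"
    proof (rule integral_mono)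
      show "integrable lborel (\<lambda>x. indicator \<Omega> x *\<^sub>R \<psi> x)" using \<psi>int by (simp add: set_integrable_def)
      fix x show "indicator (ball c r) x \<le> indicator \<Omega> x *\<^sub>R \<psi> x"
        using \<psi>one ballsub \<psi>nn by (auto simp: indicator_def)
    qed (rule indK)
    moreover have "(LINT x|lborel. indicator (ball c r) x) = measure lborel (ball c r)"
      by (simp add: integral_indicator)
    moreover have "measure lborel (ball c r) > 0" using content_ball_pos rpos by blast
    ultimately show ?thesis unfolding B_def set_lebesgue_integral_def by linarith
  qed
  define t where "t = min (R\<^sub>1 / (sqrt M2 + 1)) (lam * B / (A + 1))"
  have sp: "sqrt M2 + 1 > 0" using M2nn by (smt (verit) real_sqrt_ge_zero)
  have tpos: "t > 0"
  proof -
    show ?thesis using assms(6,7) Bpos Ann sp by (simp add: t_def)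
  qed
  have "t \<le> R\<^sub>1 / (sqrt M2 + 1)" by (simp add: t_def)
  then have t1: "t * (sqrt M2 + 1) \<le> R\<^sub>1" using sp by (simp add: pos_le_divide_eq)
  have "t \<le> lam * B / (A + 1)" by (simp add: t_def)
  then have t2: "t * (A + 1) \<le> lam * B" using Ann by (simp add: pos_le_divide_eq)
  define u where "u x = t * \<psi> x" for x
  define Du where "Du x = t *\<^sub>R g x" for x
  have Smu: "Sm \<phi> u" unfolding u_def by (rule Sm_mul[OF Sm_const Sm\<psi>])
  have ucont: "continuous_on UNIV u" using Sm_cont[OF sm Smu] .
  have Ducont: "continuous_on UNIV Du" unfolding Du_def by (intro continuous_intros gcont)
  have ueq: "u = (\<lambda>x. t * \<psi> x)" by (simp add: fun_eq_iff u_def)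
  have gradu: "grad2 u = Du"
    unfolding ueq by (simp add: fun_eq_iff vec_eq_iff grad2_def Du_def g_def Sm_pd_scale[OF sm Sm\<psi>])
  have testu: "test_fn \<Omega> u"
  proof -
    have "{x. u x \<noteq> 0} \<subseteq> cball c \<epsilon>" using supp by (auto simp: u_def)
    then have cl: "closure {x. u x \<noteq> 0} \<subseteq> cball c \<epsilon>"
      by (intro closure_minimal) auto
    then have "compact (closure {x. u x \<noteq> 0})"
      by (meson bounded_cball bounded_subset compact_closure closure_subset order_trans)
    then show ?thesis unfolding test_fn_def using Sm_smooth2[OF sm Smu] cl \<epsilon>(2) by auto
  qed
  have W: "W012 \<Omega> u Du"
    unfolding W012_def
    using cont_meas[OF ucont] cont_meas[OF Ducont] testu gradu
    by (intro conjI exI[of _ "\<lambda>k. u"]) auto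
  have norm_eq: "W012_norm \<Omega> Du = t * sqrt M2"
  proof -
    have "(\<integral>x\<in>\<Omega>. (norm (Du x))\<^sup>2 \<partial>lborel) = t\<^sup>2 * M2"
      unfolding M2_def Du_def by (simp add: power_mult_distrib set_integral_mult_right)
    then show ?thesis using tpos by (simp add: W012_norm_def real_sqrt_mult)
  qed
  have phi1: "\<phi> (W012_norm \<Omega> Du) = 1"
  proof -
    have "t * sqrt M2 \<le> R\<^sub>1" using t1 tpos by (smt (verit) mult_nonneg_nonneg distrib_left mult.commute)
    then show ?thesis using norm_eq assms(11) by simp
  qed
  have Aeq: "(\<integral>x\<in>\<Omega>. (F (Du x))\<^sup>2 \<partial>lborel) = t\<^sup>2 * A"
    unfolding A_def Du_def Fhom by (simp add: power_mult_distrib set_integral_mult_right)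
  have expint: "set_integrable lborel \<Omega> (\<lambda>x. exp (u x))"
    by (rule cont_set_int[OF _ bdd opn]) (intro continuous_intros ucont)
  define E where "E = (\<integral>x\<in>\<Omega>. exp (u x) \<partial>lborel)"
  have Ege: "E \<ge> measure lborel \<Omega> + t * B"
  proof -
    have "(LINT x|lborel. indicator \<Omega> x + t * (indicator \<Omega> x * \<psi> x))
          \<le> (LINT x|lborel. indicator \<Omega> x *\<^sub>R exp (u x))"
    proof (rule integral_mono)
      show "integrable lborel (\<lambda>x. indicator \<Omega> x + t * (indicator \<Omega> x * \<psi> x))"
        using \<psi>int ind\<Omega> unfolding set_integrable_def by (auto intro!: Bochner_Integration.integrable_add Bochner_Integration.integrable_mult_right)
      show "integrable lborel (\<lambda>x. indicator \<Omega> x *\<^sub>R exp (u x))"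
        using expint by (simp add: set_integrable_def)
      fix x show "indicator \<Omega> x + t * (indicator \<Omega> x * \<psi> x) \<le> indicator \<Omega> x *\<^sub>R exp (u x)"
        using exp_ge_add_one_self[of "t * \<psi> x"] by (auto simp: indicator_def u_def)
    qed
    moreover have "(LINT x|lborel. indicator \<Omega> x + t * (indicator \<Omega> x * \<psi> x))
        = measure lborel \<Omega> + t * B"
      using \<psi>int ind\<Omega> unfolding B_def set_lebesgue_integral_def set_integrable_def
      by (simp add: integral_indicator)
    ultimately show ?thesis unfolding E_def set_lebesgue_integral_def by linarith
  qed
  have key: "(1/2) * (t\<^sup>2 * A) < lam * (t * B)"
  proof -
    have "t * A < lam * B" using t2 tpos by (simp add: algebra_simps)
    then have "t * (t * A) < t * (lam * B)" using tpos by simp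
    moreover have "t * (t * A) \<ge> 0" using tpos Ann by simp
    ultimately show ?thesis by (simp add: power2_eq_square algebra_simps)
  qed
  have "(1/2) * (\<integral>x\<in>\<Omega>. (F (Du x))\<^sup>2 \<partial>lborel)
       - lam * (\<integral>x\<in>\<Omega>. \<phi> (W012_norm \<Omega> Du) * exp (u x) \<partial>lborel)
       = (1/2) * (t\<^sup>2 * A) - lam * E"
    unfolding Aeq phi1 E_def by simp
  also have "\<dots> < - lam * measure lborel \<Omega>"
  proof -
    have "lam * E \<ge> lam * (measure lborel \<Omega> + t * B)" using Ege assms(6) by simp
    then show ?thesis using key by (simp add: algebra_simps)
  qed
  finally show ?thesis
    using W expint phi1 by (intro exI[of _ u] exI[of _ Du]) auto
qed

end
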